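(* Let $q$ be a prime power with $q\equiv \pm1\pmod 5$, let $b\in\mathbb{F}_q$ be a root of $x^2+x-1$, let $\alpha\in\mathbb{F}_{q^5}$ be normal over $\mathbb{F}_q$, and let $f=x^2-bx+1$. Then $L_f(\alpha)+a$ is $2$-normal over $\mathbb{F}_q$ for every $a\in\mathbb{F}_q$ with the exception of at most one value of $a$.
   Context: For $h(x)=\sum_i a_ix^i\in\mathbb{F}_q[x]$, $L_h(\alpha)=\sum_i a_i\alpha^{q^i}$ for $\alpha\in\mathbb{F}_{q^5}$. An element $\alpha\in\mathbb{F}_{q^n}$ is normal over $\mathbb{F}_q$ if $\alpha,\alpha^q,\dots,\alpha^{q^{n-1}}$ form an $\mathbb{F}_q$-basis of $\mathbb{F}_{q^n}$. For $\alpha\in\mathbb{F}_{q^n}$ let $g_\alpha(x)=\sum_{i=0}^{n-1}\alpha^{q^i}x^{n-1-i}$; $\alpha$ is $k$-normal over $\mathbb{F}_q$ if $\gcd(x^n-1,g_\alpha(x))$ in $\mathbb{F}_{q^n}[x]$ has degree $k$ (here $n=5$). *)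

theory Defs
  imports "HOL-Computational_Algebra.Computational_Algebra"
begin

text \<open>Ambient field F_{q^n} is a finite field type 'a; the subfield F_q is the
set of fixed points of x \<mapsto> x^q.\<close>

definition subfield_Fq :: "nat \<Rightarrow> 'a::{field_gcd,finite} set" where
  "subfield_Fq q = {x. x ^ q = x}"

definition L_poly :: "nat \<Rightarrow> 'a::{field_gcd,finite} poly \<Rightarrow> 'a \<Rightarrow> 'a" where
  "L_poly q h \<alpha> = (\<Sum>i\<le>degree h. coeff h i * \<alpha> ^ (q ^ i))"

definition normal_elem :: "nat \<Rightarrow> nat \<Rightarrow> 'a::{field_gcd,finite} \<Rightarrow> bool" where
  "normal_elem q n \<alpha> \<longleftrightarrow>
     (\<forall>c. (\<forall>i<n. c i \<in> subfield_Fq q) \<and> (\<Sum>i<n. c i * \<alpha> ^ (q ^ i)) = 0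
          \<longrightarrow> (\<forall>i<n. c i = 0)) \<and>
     (\<forall>y. \<exists>c. (\<forall>i<n. c i \<in> subfield_Fq q) \<and> y = (\<Sum>i<n. c i * \<alpha> ^ (q ^ i)))"

definition g_poly :: "nat \<Rightarrow> nat \<Rightarrow> 'a::{field_gcd,finite} \<Rightarrow> 'a poly" where
  "g_poly q n \<alpha> = (\<Sum>i<n. monom (\<alpha> ^ (q ^ i)) (n - 1 - i))"

definition k_normal :: "nat \<Rightarrow> nat \<Rightarrow> nat \<Rightarrow> 'a::{field_gcd,finite} \<Rightarrow> bool" where
  "k_normal q n k \<alpha> \<longleftrightarrow>
     degree (gcd (monom 1 n - 1 :: 'a poly) (g_poly q n \<alpha>)) = k"

end

theory Submission
  imports Defs
begin

lemma field_pow_card_same: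
  fixes x :: "'a :: {field, finite}"
  shows "x ^ card (UNIV :: 'a set) = x"
proof (cases "x = 0")
  case False
  have "x * (\<Prod>y\<in>UNIV-{0}. x * y) = x * x ^ (card (UNIV :: 'a set) - 1) * \<Prod>(UNIV-{0})"
    by (simp add: prod.distrib mult_ac)
  also have "x * x ^ (card (UNIV :: 'a set) - 1) = x ^ Suc (card (UNIV :: 'a set) - 1)"
    by (subst power_Suc) auto
  also have "Suc (card (UNIV :: 'a set) - 1) = card (UNIV :: 'a set)"
    using finite_UNIV_card_ge_0[where ?'a = 'a] by simp
  also have "(\<Prod>y\<in>UNIV-{0}. x * y) = (\<Prod>y\<in>UNIV-{0}. y)"
    by (rule prod.reindex_bij_witness[of _ "\<lambda>y. y / x" "\<lambda>y. x * y"]) (use False in auto)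
  finally show ?thesis
    by simp
qed (use finite_UNIV_card_ge_0[where ?'a = 'a] in auto)

lemma char_is_p:
  fixes p m :: nat
  assumes "prime p" "card (UNIV :: 'a::{field,finite} set) = p ^ m"
  shows "CHAR('a) = p"
proof -
  have pc: "prime CHAR('a)"
    using prime_CHAR_semidom[where ?'a = 'a] finite_imp_CHAR_pos[where ?'a='a] by auto
  have s: "(\<Sum>x\<in>(UNIV::'a set). x + 1) = (\<Sum>x\<in>UNIV. x)"
    by (rule sum.reindex_bij_witness[of _ "\<lambda>y. y - 1" "\<lambda>y. y + 1"]) auto
  have "of_nat (card (UNIV::'a set)) = (0::'a)"
    using s by (simp add: sum.distrib)
  hence "CHAR('a) dvd card (UNIV::'a set)" by (simp only: of_nat_eq_0_iff_char_dvd)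
  hence "CHAR('a) dvd p ^ m" using assms by simp
  hence "CHAR('a) dvd p" using pc prime_dvd_power by blast
  thus ?thesis using pc assms(1) primes_dvd_imp_eq by blast
qed

lemma sum5:
  fixes F :: "nat \<Rightarrow> 'c::comm_monoid_add"
  shows "(\<Sum>i<5. F i) = F 0 + F 1 + F 2 + F 3 + F 4"
  by (simp add: eval_nat_numeral ac_simps)

context
  fixes q :: nat
  assumes FA: "\<And>x y :: 'a :: {field_gcd,finite}. (x + y) ^ q = x ^ q + y ^ q"
  and qpos: "q > 0"
  and FIN: "\<And>x :: 'a. x ^ (q ^ 5) = x"
begin
lemma fr_neg: "(- x :: 'a) ^ q = - (x ^ q)"
proof -
  have "(x + - x) ^ q = x ^ q + (- x) ^ q" by (rule FA)
  thus ?thesis using qpos by (simp add: eq_neg_iff_add_eq_0 add.commute power_0_left)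
qed

lemma fr_diff: "(x - y :: 'a) ^ q = x ^ q - y ^ q"
  using FA[of x "-y"] fr_neg[of y] by simp

lemma fr_sum: "(sum (f::'b \<Rightarrow> 'a) A) ^ q = (\<Sum>i\<in>A. f i ^ q)"
  by (induction A rule: infinite_finite_induct) (use qpos FA in auto)

lemma frn_add: "(x + y :: 'a) ^ (q ^ n) = x ^ (q^n) + y ^ (q^n)"
proof (induction n)
  case (Suc n)
  have "(x + y) ^ (q ^ Suc n) = ((x + y) ^ (q ^ n)) ^ q" by (metis power_Suc2 power_mult)
  also have "\<dots> = (x ^ (q^n)) ^ q + (y ^ (q^n)) ^ q" using Suc FA by simp
  finally show ?case by (metis power_Suc2 power_mult)
qed simp

lemma Fq_pow: "c \<in> subfield_Fq q \<Longrightarrow> (c::'a) ^ (q ^ n) = c"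
proof (induction n)
  case (Suc n)
  then show ?case by (simp add: subfield_Fq_def power_mult mult.commute)
qed simp

lemma Fq_add: "a \<in> subfield_Fq q \<Longrightarrow> b \<in> subfield_Fq q \<Longrightarrow> (a + b::'a) \<in> subfield_Fq q"
  by (simp add: subfield_Fq_def FA)
lemma Fq_mult: "a \<in> subfield_Fq q \<Longrightarrow> b \<in> subfield_Fq q \<Longrightarrow> (a * b::'a) \<in> subfield_Fq q"
  by (simp add: subfield_Fq_def power_mult_distrib)
lemma Fq_neg: "a \<in> subfield_Fq q \<Longrightarrow> (- a::'a) \<in> subfield_Fq q"
  by (simp add: subfield_Fq_def fr_neg)
lemma Fq_div: "a \<in> subfield_Fq q \<Longrightarrow> b \<in> subfield_Fq q \<Longrightarrow> (a / b::'a) \<in> subfield_Fq q"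
  by (simp add: subfield_Fq_def power_divide)
lemma Fq_diff: "a \<in> subfield_Fq q \<Longrightarrow> b \<in> subfield_Fq q \<Longrightarrow> (a - b::'a) \<in> subfield_Fq q"
  by (simp add: subfield_Fq_def fr_diff)
lemma Fq_0: "(0::'a) \<in> subfield_Fq q" using qpos by (simp add: subfield_Fq_def)
lemma Fq_1: "(1::'a) \<in> subfield_Fq q" by (simp add: subfield_Fq_def)

lemma L_zero: "L_poly q (0::'a poly) x = 0"
  by (simp add: L_poly_def)

lemma L_pCons: "L_poly q (pCons c u) (x::'a) = c * x + L_poly q u (x ^ q)"
proof (cases "u = 0")
  case True
  then show ?thesis by (simp add: L_poly_def)
next
  case False
  have "L_poly q (pCons c u) x = (\<Sum>i\<le>Suc (degree u). coeff (pCons c u) i * x ^ (q ^ i))"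
    using False by (simp add: L_poly_def)
  also have "\<dots> = c * x + (\<Sum>i\<le>degree u. coeff u i * x ^ (q ^ Suc i))"
    by (subst sum.atMost_Suc_shift) simp
  also have "(\<Sum>i\<le>degree u. coeff u i * x ^ (q ^ Suc i)) = L_poly q u (x ^ q)"
    by (simp add: L_poly_def power_mult)
  finally show ?thesis .
qed

lemma L_add: "L_poly q (u + v) (x::'a) = L_poly q u x + L_poly q v x"
proof (induction u arbitrary: v x)
  case 0
  then show ?case by (simp add: L_zero)
next
  case (pCons a p)
  show ?case
  proof (cases v)
    case (pCons b v')
    have "L_poly q (p + v') (x^q) = L_poly q p (x^q) + L_poly q v' (x^q)"
      using pCons.IH by (metis add.commute)
    then show ?thesis using pCons by (simp add: L_pCons algebra_simps)
  qed
qed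

lemma L_smult: "L_poly q (smult c u) (x::'a) = c * L_poly q u x"
  by (induction u arbitrary: x) (simp_all add: L_zero L_pCons algebra_simps)

lemma L_arg0: "L_poly q u (0::'a) = 0"
  by (induction u) (use qpos in \<open>simp_all add: L_zero L_pCons power_0_left\<close>)

definition fqpoly :: "nat \<Rightarrow> 'b::{field_gcd,finite} poly \<Rightarrow> bool" where
  "fqpoly r u \<longleftrightarrow> (\<forall>i. coeff u i \<in> subfield_Fq r)"

lemma fqpoly_pCons: "fqpoly q (pCons c (u::'a poly)) \<longleftrightarrow> c \<in> subfield_Fq q \<and> fqpoly q u"
  unfolding fqpoly_def using Fq_0
  by (auto simp: coeff_pCons split: nat.splits)

lemma fqpoly_0: "fqpoly q (0::'a poly)"
  using Fq_0 by (simp add: fqpoly_def)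

lemma L_frob: "fqpoly q u \<Longrightarrow> L_poly q u ((x::'a) ^ q) = (L_poly q u x) ^ q"
proof (induction u arbitrary: x)
  case 0
  then show ?case using qpos by (simp add: L_zero)
next
  case (pCons a p)
  then show ?case
    by (simp add: L_pCons fqpoly_pCons FA power_mult_distrib subfield_Fq_def)
qed

lemma L_mult: "fqpoly q v \<Longrightarrow> L_poly q (u * v) (x::'a) = L_poly q u (L_poly q v x)"
proof (induction u arbitrary: x)
  case 0
  then show ?case by (simp add: L_zero)
next
  case (pCons a p)
  have "L_poly q (pCons a p * v) x = a * L_poly q v x + L_poly q (p * v) (x ^ q)"
    by (simp add: L_add L_smult L_pCons)
  also have "L_poly q (p * v) (x ^ q) = L_poly q p ((L_poly q v x) ^ q)"
    using pCons L_frob by simp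
  finally show ?case by (simp add: L_pCons)
qed


definition sig :: "'a poly \<Rightarrow> 'a poly" where
  "sig u = map_poly (\<lambda>c. c ^ q) u"

lemma coeff_sig: "coeff (sig (u::'a poly)) i = (coeff u i) ^ q"
  using qpos by (simp add: sig_def coeff_map_poly power_0_left)

lemma sig_add: "sig (u + v) = sig u + sig v"
  by (rule poly_eqI) (simp add: coeff_sig FA)
lemma sig_diff: "sig (u - v) = sig u - sig v"
  by (rule poly_eqI) (simp add: coeff_sig fr_diff)
lemma sig_mult: "sig (u * v) = sig u * sig v"
  by (rule poly_eqI) (simp add: coeff_sig coeff_mult fr_sum power_mult_distrib)
lemma degree_sig: "degree (sig u) = degree u"
  unfolding sig_def using qpos by (intro degree_map_poly) simp
lemma fqpoly_sig: "fqpoly q u \<longleftrightarrow> sig u = u"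
  by (auto simp: fqpoly_def subfield_Fq_def poly_eq_iff coeff_sig)

definition Pp :: "'a poly" where "Pp = [:-1,0,0,0,0,1:]"

lemma Pp_nz: "Pp \<noteq> 0" by (simp add: Pp_def)
lemma degree_Pp: "degree Pp = 5" by (simp add: Pp_def)
lemma fqpoly_Pp: "fqpoly q Pp"
  by (simp add: Pp_def fqpoly_pCons fqpoly_0 Fq_0 Fq_1 Fq_neg)

lemma L_Pp: "L_poly q Pp (x::'a) = 0"
proof -
  have "L_poly q Pp x = - x + ((((x ^ q) ^ q) ^ q) ^ q) ^ q"
    by (simp add: Pp_def L_pCons L_zero)
  also have "((((x ^ q) ^ q) ^ q) ^ q) ^ q = x ^ (q ^ 5)"
    by (simp add: power_mult[symmetric] eval_nat_numeral mult_ac)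
  finally show ?thesis using FIN by simp
qed

lemma g_expl: "g_poly q 5 (x::'a) = [:x ^ (q^4), x ^ (q^3), x ^ (q^2), x ^ q, x:]"
  by (simp add: g_poly_def eval_nat_numeral lessThan_Suc monom_altdef)



lemma pwS: "((x::'a) ^ (q ^ n)) ^ q = x ^ (q ^ Suc n)"
  by (simp only: power_mult[symmetric] power_Suc2)
lemma pw1: "((x::'a) ^ q) ^ q = x ^ (q ^ 2)"
  using pwS[of x 1] by (simp only: power_one_right Suc_1)
lemma pw2: "((x::'a) ^ (q^2)) ^ q = x ^ (q ^ 3)"
  using pwS[of x 2] by (simp only: Suc_numeral semiring_norm)
lemma pw3: "((x::'a) ^ (q^3)) ^ q = x ^ (q ^ 4)"
  using pwS[of x 3] by (simp only: Suc_numeral semiring_norm)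
lemma pw4: "((x::'a) ^ (q^4)) ^ q = x"
  using pwS[of x 4] FIN[of x] by (simp only: Suc_numeral semiring_norm)
lemma pw0: "((x::'a) ^ q) ^ (q^4) = x"
  using pw4[of x] by (simp only: power_mult[symmetric] mult.commute)

lemma qx2: "((x::'a) ^ q) ^ (q^2) = x ^ (q ^ 3)"
  by (metis pw1 pw2 power_mult mult.commute)
lemma qx3: "((x::'a) ^ q) ^ (q^3) = x ^ (q ^ 4)"
  by (metis pw1 pw2 pw3 power_mult mult.commute)
lemmas pws = pw1 pw2 pw3 pw4 pw0 qx2 qx3

lemma sig_g: "sig (g_poly q 5 (x::'a)) = g_poly q 5 (x ^ q)"
proof -
  have "sig [:a,b,c,d,e:] = [:a^q,b^q,c^q,d^q,e^q:]" for a b c d e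
    using qpos by (simp add: sig_def map_poly_pCons power_0_left)
  thus ?thesis by (simp only: g_expl pws)
qed

lemma shift_g: "pCons 0 (g_poly q 5 (x::'a)) - g_poly q 5 (x ^ q) = smult x Pp"
  by (simp only: g_expl pws) (simp add: Pp_def)

lemma Pp_dvd_shift: "Pp dvd pCons 0 (w::'a poly) \<Longrightarrow> Pp dvd w"
proof -
  assume a: "Pp dvd pCons 0 w"
  have "w = pCons 0 (pCons 0 (pCons 0 (pCons 0 (pCons 0 w)))) - Pp * w"
    by (simp add: Pp_def)
  also have "pCons 0 (pCons 0 (pCons 0 (pCons 0 (pCons 0 w)))) = [:0,0,0,0,1:] * pCons 0 w"
    by simp
  finally show ?thesis using a by (metis dvd_diff dvd_mult dvd_triv_left)
qed

lemma g_add: "g_poly q 5 (x + y::'a) = g_poly q 5 x + g_poly q 5 y"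
  by (simp add: g_expl frn_add FA)

lemma g_smult: assumes "c \<in> subfield_Fq q" shows "g_poly q 5 (c * x::'a) = smult c (g_poly q 5 x)"
  using assms by (simp add: g_expl power_mult_distrib Fq_pow[OF assms] subfield_Fq_def)

lemma g_zero: "g_poly q 5 (x::'a) = 0 \<Longrightarrow> x = 0"
  by (simp add: g_expl)

lemma g_0: "g_poly q 5 (0::'a) = 0"
  using qpos by (simp add: g_expl)

lemma degree_g: "degree (g_poly q 5 (x::'a)) \<le> 4"
  by (simp only: g_expl) simp

lemma Pp_dvd_g: "Pp dvd g_poly q 5 (x::'a) \<Longrightarrow> x = 0"
proof (rule ccontr)
  assume a: "Pp dvd g_poly q 5 x" "x \<noteq> 0"
  hence "g_poly q 5 x \<noteq> 0" using g_zero by blast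
  hence "degree Pp \<le> degree (g_poly q 5 x)" using a dvd_imp_degree_le by blast
  thus False using degree_g[of x] by (simp add: degree_Pp)
qed

lemma corr: "fqpoly q (u::'a poly) \<Longrightarrow> Pp dvd (u * g_poly q 5 x - g_poly q 5 (L_poly q u x))"
proof (induction u arbitrary: x)
  case 0
  then show ?case by (simp add: L_zero g_0)
next
  case (pCons a p)
  have a: "a \<in> subfield_Fq q" and p: "fqpoly q p" using pCons.prems by (auto simp: fqpoly_pCons)
  have IH: "Pp dvd (p * g_poly q 5 (x^q) - g_poly q 5 (L_poly q p (x^q)))" using pCons.IH p by blast
  have "pCons a p * g_poly q 5 x - g_poly q 5 (L_poly q (pCons a p) x)
     = pCons 0 (p * g_poly q 5 x) - g_poly q 5 (L_poly q p (x^q))"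
    using a by (simp add: L_pCons g_add g_smult)
  also have "\<dots> = p * (pCons 0 (g_poly q 5 x) - g_poly q 5 (x ^ q))
     + (p * g_poly q 5 (x^q) - g_poly q 5 (L_poly q p (x^q)))"
  proof -
    have "pCons 0 (p * g_poly q 5 x) = p * pCons 0 (g_poly q 5 x)" by simp
    thus ?thesis by (simp only: algebra_simps)
  qed
  also have "\<dots> = p * smult x Pp + (p * g_poly q 5 (x^q) - g_poly q 5 (L_poly q p (x^q)))"
    by (simp only: shift_g)
  finally show ?case using IH by (metis dvd_add dvd_mult dvd_smult dvd_refl)
qed


lemma L_ext: "degree u < N \<Longrightarrow> L_poly q u (x::'a) = (\<Sum>i<N. coeff u i * x ^ (q ^ i))"
  unfolding L_poly_def
  by (rule sum.mono_neutral_left) (auto simp: coeff_eq_0)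

lemma sig_Pp: "sig Pp = Pp" using fqpoly_Pp fqpoly_sig by blast

lemma normal_dvd:
  assumes nrm: "normal_elem q 5 (\<alpha>::'a)" and fw: "fqpoly q w" and Lw: "L_poly q w \<alpha> = 0"
  shows "Pp dvd w"
proof -
  define r where "r = w mod Pp"
  define s where "s = w div Pp"
  have ws: "w = s * Pp + r" unfolding r_def s_def by simp
  have dr: "degree r < 5"
  proof (cases "r = 0")
    case False
    then show ?thesis using degree_mod_less[OF Pp_nz, of w] by (simp add: r_def degree_Pp)
  qed simp
  have "sig w = w" using fw fqpoly_sig by blast
  hence "w = sig s * Pp + sig r" using ws by (metis sig_add sig_mult sig_Pp)
  hence "sig r = w - sig s * Pp" by simp
  hence "sig r = w + (- sig s) * Pp" by (simp only: diff_conv_add_uminus minus_mult_left)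
  hence "sig r mod Pp = w mod Pp" by (simp only: mod_mult_self1)
  moreover have "sig r mod Pp = sig r"
    by (rule mod_poly_less) (use dr in \<open>simp add: degree_sig degree_Pp\<close>)
  ultimately have "sig r = r" by (simp add: r_def)
  hence fr: "fqpoly q r" using fqpoly_sig by blast
  have "L_poly q w \<alpha> = L_poly q (s * Pp) \<alpha> + L_poly q r \<alpha>" using ws L_add by simp
  also have "L_poly q (s * Pp) \<alpha> = 0" by (simp add: L_mult fqpoly_Pp L_Pp L_arg0)
  finally have "L_poly q r \<alpha> = 0" using Lw by simp
  hence "(\<Sum>i<5. coeff r i * \<alpha> ^ (q ^ i)) = 0" using L_ext[OF dr] by simp
  moreover have "\<forall>i<5. coeff r i \<in> subfield_Fq q" using fr by (simp add: fqpoly_def)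
  ultimately have cz: "\<forall>i<5. coeff r i = 0" using nrm unfolding normal_elem_def by blast
  have "r = 0"
  proof (intro poly_eqI)
    fix i show "coeff r i = coeff 0 i"
    proof (cases "i < 5")
      case True thus ?thesis using cz by simp
    next
      case False thus ?thesis using dr by (simp add: coeff_eq_0)
    qed
  qed
  thus ?thesis by (simp add: r_def mod_eq_0_iff_dvd)
qed


lemma annih:
  fixes x :: 'a
  shows "\<exists>m. fqpoly q m \<and> m \<noteq> 0 \<and> L_poly q m x = 0 \<and>
    (\<forall>n. fqpoly q n \<longrightarrow> L_poly q n x = 0 \<longrightarrow> m dvd n) \<and>
    degree (gcd Pp (g_poly q 5 x)) + degree m = 5"
proof -
  define G where "G = g_poly q 5 x"
  define D where "D = gcd Pp G"
  define M where "M = Pp div D"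
  define G' where "G' = G div D"
  define m where "m = smult (inverse (lead_coeff M)) M"
  have Dnz: "D \<noteq> 0" using Pp_nz by (simp add: D_def)
  have PDM: "Pp = D * M" unfolding M_def D_def by simp
  have GDG: "G = D * G'" unfolding G'_def D_def by simp
  have Mnz: "M \<noteq> 0" using PDM Pp_nz by auto
  have lM: "lead_coeff M \<noteq> 0" using Mnz by simp
  have mnz: "m \<noteq> 0" using Mnz lM by (simp add: m_def)
  have lm: "lead_coeff m = 1" using lM by (simp add: m_def lead_coeff_smult)
  have degm: "degree m = degree M" using lM by (simp add: m_def)
  have deg: "degree D + degree m = 5"
    using degree_mult_eq[OF Dnz Mnz] PDM degm by (simp add: degree_Pp)
  have cop: "coprime M G'" unfolding M_def G'_def D_def using div_gcd_coprime Pp_nz by blast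
  have key: "m dvd n" if "Pp dvd n * G" for n
  proof -
    have "D * M dvd D * (n * G')" using that PDM GDG by (simp add: ac_simps)
    hence "M dvd n * G'" using Dnz by simp
    hence "M dvd n" using cop coprime_dvd_mult_left_iff by blast
    thus ?thesis using lM by (simp add: m_def smult_dvd_iff)
  qed
  have "M * G = Pp * G'" using PDM GDG by (simp add: ac_simps)
  hence "Pp dvd M * G" by simp
  hence PmG: "Pp dvd m * G" by (simp add: m_def dvd_smult)
  then obtain k where k: "m * G = Pp * k" by blast
  have "sig m * sig G = Pp * sig k" using k sig_mult sig_Pp by metis
  hence "Pp dvd sig m * g_poly q 5 (x ^ q)" using sig_g G_def by (metis dvd_triv_left)
  moreover have "sig m * pCons 0 G = sig m * g_poly q 5 (x ^ q) + Pp * smult x (sig m)"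
  proof -
    have "pCons 0 G = g_poly q 5 (x ^ q) + smult x Pp" using shift_g[of x] G_def
      by (simp add: algebra_simps)
    thus ?thesis by (simp add: algebra_simps)
  qed
  ultimately have "Pp dvd sig m * pCons 0 G" by (metis dvd_add dvd_triv_left)
  hence "Pp dvd pCons 0 (sig m * G)" by simp
  hence "Pp dvd sig m * G" by (rule Pp_dvd_shift)
  hence "m dvd sig m" by (rule key)
  then obtain c where c: "sig m = m * c" by blast
  have snz: "sig m \<noteq> 0" using mnz degree_sig
    by (metis coeff_sig leading_coeff_0_iff lm one_neq_zero power_one)
  hence cnz: "c \<noteq> 0" using c by auto
  have "degree (sig m) = degree m + degree c" using c degree_mult_eq[OF mnz cnz] by simp
  hence dc: "degree c = 0" using degree_sig[of m] by simp
  have "lead_coeff (sig m) = 1" using lm degree_sig[of m] by (simp add: coeff_sig)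
  hence "lead_coeff c = 1" using c lm by (simp add: lead_coeff_mult)
  hence "c = 1" using dc by (metis degree_0_id one_pCons)
  hence fm: "fqpoly q m" using c fqpoly_sig by simp
  have "Pp dvd m * G - g_poly q 5 (L_poly q m x)" using corr[OF fm] G_def by simp
  hence "Pp dvd m * G - (m * G - g_poly q 5 (L_poly q m x))" by (rule dvd_diff[OF PmG])
  hence "Pp dvd g_poly q 5 (L_poly q m x)" by (simp only: diff_diff_eq2 add_diff_cancel_left')
  hence Lm: "L_poly q m x = 0" by (rule Pp_dvd_g)
  have "m dvd n" if "fqpoly q n" "L_poly q n x = 0" for n
  proof -
    have "Pp dvd n * G - g_poly q 5 0" using corr[OF that(1), of x] that(2) G_def by simp
    thus ?thesis using key g_0 by simp
  qed
  thus ?thesis using fm mnz Lm deg unfolding D_def G_def by blast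
qed


lemma fqpoly_mult: "fqpoly q u \<Longrightarrow> fqpoly q v \<Longrightarrow> fqpoly q (u * (v::'a poly))"
  by (simp add: fqpoly_sig sig_mult)

lemma coprime_X1: assumes "poly p (1::'a) \<noteq> 0" shows "coprime [:-1,1:] p"
proof (rule coprimeI)
  fix d assume d1: "d dvd [:-1,1:]" and d2: "d dvd p"
  have "poly (p - [:poly p 1:]) 1 = 0" by simp
  hence "[:-1,1:] dvd p - [:poly p 1:]" using poly_eq_0_iff_dvd by fastforce
  hence "d dvd p - [:poly p 1:]" using d1 dvd_trans by blast
  hence "d dvd p - (p - [:poly p 1:])" using d2 dvd_diff by blast
  hence "d dvd [:poly p 1:]" by simp
  thus "is_unit d" using assms
    using is_unit_triv[of "poly p 1"] dvd_unit_imp_unit by blast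
qed

lemma main_ctx:
  fixes b \<alpha> :: 'a
  assumes bF: "b \<in> subfield_Fq q" and bq: "b\<^sup>2 + b - 1 = 0" and b3: "3 + b \<noteq> 0"
    and nrm: "normal_elem q 5 \<alpha>"
  shows "card {a \<in> subfield_Fq q.
            \<not> k_normal q 5 2 (L_poly q [:1, - b, 1:] \<alpha> + a)} \<le> 1"
proof -
  define \<Phi> :: "'a poly" where "\<Phi> = [:1,1,1,1,1:]"
  define f where "f = [:1, - b, 1:]"
  define f2 where "f2 = [:1, 1 + b, 1:]"
  define X1 :: "'a poly" where "X1 = [:-1, 1:]"
  define h where "h = [:-1, - b, b, 1:]"
  have bb: "b * b = 1 - b" using bq by (simp add: power2_eq_square algebra_simps)
  have ff2: "f * f2 = \<Phi>" unfolding f_def f2_def \<Phi>_def by (simp add: algebra_simps bb)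
  have hX: "h = X1 * f2" unfolding h_def X1_def f2_def by simp
  have PX: "Pp = X1 * \<Phi>" unfolding Pp_def X1_def \<Phi>_def by simp
  define Tr where "Tr = L_poly q \<Phi> \<alpha>"
  have TrL: "L_poly q \<Phi> y = y + y ^ q + y ^ (q^2) + y ^ (q^3) + y ^ (q^4)" for y :: 'a
    unfolding \<Phi>_def by (simp add: L_pCons L_zero pws add_ac)
  have "Tr ^ q = Tr" unfolding Tr_def TrL
    by (simp add: FA pws add_ac)
  hence TrF: "Tr \<in> subfield_Fq q" by (simp add: subfield_Fq_def)
  have Tr0: "Tr \<noteq> 0"
  proof
    assume T: "Tr = 0"
    have "(\<Sum>i<5. (1::'a) * \<alpha> ^ (q ^ i)) = Tr"
      unfolding sum5 Tr_def TrL by (simp add: add_ac)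
    hence s0: "(\<Sum>i<5. (1::'a) * \<alpha> ^ (q ^ i)) = 0" using T by simp
    have "\<forall>c. (\<forall>i<5. c i \<in> subfield_Fq q) \<and> (\<Sum>i<5. c i * \<alpha> ^ (q ^ i)) = 0
          \<longrightarrow> (\<forall>i<5. c i = 0)" using nrm unfolding normal_elem_def by blast
    hence "(\<forall>i<(5::nat). (1::'a) \<in> subfield_Fq q) \<and> (\<Sum>i<5. (1::'a) * \<alpha> ^ (q ^ i)) = 0
          \<longrightarrow> (\<forall>i<(5::nat). (1::'a) = 0)" by (rule spec[of _ "\<lambda>_. 1"])
    hence "\<forall>i<(5::nat). (1::'a) = 0" using s0 Fq_1 by blast
    thus False by (metis one_neq_zero zero_less_numeral)
  qed
  define a0 where "a0 = - Tr / (3 + b)"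
  have good: "k_normal q 5 2 (L_poly q f \<alpha> + a)" if aF: "a \<in> subfield_Fq q" and aa: "a \<noteq> a0" for a
  proof -
    define c where "c = a / Tr"
    have cF: "c \<in> subfield_Fq q" unfolding c_def using aF TrF by (rule Fq_div)
    define e where "e = [:1:] + smult c f2"
    define w where "w = [:1 + c, - b + c, 1 + c, c, c:]"
    have bb': "b * (b * c) = (1 - b) * c" using bb by (simp only: mult.assoc[symmetric])
    have wfe: "w = f * e" unfolding w_def f_def e_def f2_def by (simp add: algebra_simps bb bb')
    have wF: "w = f + smult c \<Phi>" unfolding w_def f_def \<Phi>_def by simp
    have fw: "fqpoly q w" unfolding w_def
      using cF bF Fq_1 by (simp add: fqpoly_pCons fqpoly_0 Fq_add Fq_neg Fq_diff)
    have fh: "fqpoly q h" unfolding h_def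
      using bF Fq_1 by (simp add: fqpoly_pCons fqpoly_0 Fq_neg)
    define \<gamma> where "\<gamma> = L_poly q f \<alpha> + a"
    have Lw: "L_poly q w \<alpha> = \<gamma>"
      unfolding wF \<gamma>_def using Tr0 by (simp add: L_add L_smult c_def Tr_def[symmetric])
    obtain m where fm: "fqpoly q m" and mnz: "m \<noteq> 0" and Lm: "L_poly q m \<gamma> = 0"
      and mdvd: "\<And>n. fqpoly q n \<Longrightarrow> L_poly q n \<gamma> = 0 \<Longrightarrow> m dvd n"
      and deg: "degree (gcd Pp (g_poly q 5 \<gamma>)) + degree m = 5"
      using annih[of \<gamma>] by blast
    have "L_poly q (m * w) \<alpha> = 0" using Lm Lw L_mult[OF fw] by simp
    hence "Pp dvd m * w" using normal_dvd[OF nrm fqpoly_mult[OF fm fw]] by simp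
    hence "(X1 * f2) * f dvd (m * e) * f" unfolding PX wfe ff2[symmetric] by (simp add: ac_simps)
    moreover have "f \<noteq> 0" unfolding f_def by simp
    ultimately have dv: "X1 * f2 dvd m * e" by simp
    have cop1: "coprime f2 e"
    proof (rule coprimeI)
      fix d assume d1: "d dvd f2" and d2: "d dvd e"
      have "d dvd e - smult c f2" by (rule dvd_diff[OF d2 dvd_smult[OF d1]])
      moreover have "e - smult c f2 = 1" unfolding e_def by simp
      ultimately show "is_unit d" by simp
    qed
    have "f2 dvd m * e" using dv by (rule dvd_mult_right)
    hence "f2 dvd m" using coprime_dvd_mult_left_iff[OF cop1] by simp
    moreover have "X1 dvd m"
    proof -
      have "poly e 1 = 1 + c * (3 + b)" unfolding e_def f2_def by (simp add: algebra_simps)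
      moreover have "1 + c * (3 + b) \<noteq> 0"
      proof
        assume "1 + c * (3 + b) = 0"
        have Tc: "Tr * c = a" using Tr0 by (simp add: c_def)
        have "Tr * (1 + c * (3 + b)) = Tr + (Tr * c) * (3 + b)" by (simp add: algebra_simps)
        hence "Tr + a * (3 + b) = 0" using \<open>1 + c * (3 + b) = 0\<close> Tc by simp
        hence "a * (3 + b) = - Tr" by (simp add: eq_neg_iff_add_eq_0 add.commute)
        hence "a = a0" unfolding a0_def using nonzero_eq_divide_eq[OF b3] by blast
        thus False using aa by simp
      qed
      ultimately have "poly e 1 \<noteq> 0" by simp
      hence cX: "coprime X1 e" unfolding X1_def by (rule coprime_X1)
      have "X1 dvd m * e" using dv by (rule dvd_mult_left)
      thus ?thesis using coprime_dvd_mult_left_iff[OF cX] by simp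
    qed
    moreover have "coprime X1 f2" unfolding X1_def
      by (rule coprime_X1) (use b3 in \<open>simp add: f2_def algebra_simps\<close>)
    ultimately have hm: "h dvd m" unfolding hX by (simp add: divides_mult)
    have dh: "degree h = 3" by (simp add: h_def)
    have hnz: "h \<noteq> 0" by (simp add: h_def)
    have d1: "degree h \<le> degree m" by (rule dvd_imp_degree_le[OF hm mnz])
    have "L_poly q h \<gamma> = 0"
    proof -
      have "h * w = e * Pp" unfolding hX wfe PX ff2[symmetric] by (simp add: ac_simps)
      hence "L_poly q (h * w) \<alpha> = 0" by (simp add: L_mult fqpoly_Pp L_Pp L_arg0)
      thus ?thesis using L_mult[OF fw] Lw by simp
    qed
    hence "m dvd h" using mdvd fh by blast
    hence "degree m \<le> degree h" by (rule dvd_imp_degree_le[OF _ hnz])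
    hence "degree (gcd Pp (g_poly q 5 \<gamma>)) = 2" using d1 deg dh by simp
    moreover have "(monom 1 5 - 1 :: 'a poly) = Pp" unfolding Pp_def
      by (simp add: numeral_eq_Suc monom_Suc monom_0 one_pCons)
    ultimately show ?thesis unfolding k_normal_def \<gamma>_def by simp
  qed
  have "{a \<in> subfield_Fq q. \<not> k_normal q 5 2 (L_poly q [:1, - b, 1:] \<alpha> + a)} \<subseteq> {a0}"
    using good unfolding f_def by blast
  hence "card {a \<in> subfield_Fq q. \<not> k_normal q 5 2 (L_poly q [:1, - b, 1:] \<alpha> + a)} \<le> card {a0}"
    by (intro card_mono) auto
  thus ?thesis by simp
qed

end

theorem lemma6p14:
  fixes q :: nat and b \<alpha> :: "'a::{field_gcd,finite}"
  assumes "\<exists>p m. prime p \<and> m > 0 \<and> q = p ^ m"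
    and "card (UNIV :: 'a set) = q ^ 5"
    and "q mod 5 = 1 \<or> q mod 5 = 4"
    and "b \<in> subfield_Fq q" and "b\<^sup>2 + b - 1 = 0"
    and "normal_elem q 5 \<alpha>"
  shows "card {a \<in> subfield_Fq q.
            \<not> k_normal q 5 2 (L_poly q [:1, - b, 1:] \<alpha> + a)} \<le> 1"
proof -
  obtain p m where p: "prime p" "m > 0" "q = p ^ m" using assms(1) by blast
  have card: "card (UNIV :: 'a set) = p ^ (m * 5)" using assms(2) p(3) by (simp add: power_mult)
  have ch: "CHAR('a) = p" by (rule char_is_p[OF p(1) card])
  have FA: "(x + y) ^ q = x ^ q + y ^ q" for x y :: 'a
    by (rule freshmans_dream') (simp_all add: ch p)
  have qpos: "q > 0" using p prime_gt_0_nat by simp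
  have FIN: "x ^ (q ^ 5) = x" for x :: 'a
    using field_pow_card_same[of x] assms(2) by simp
  have b3: "3 + b \<noteq> 0"
  proof
    assume "3 + b = 0"
    hence "b = -3" by (simp add: eq_neg_iff_add_eq_0 add.commute)
    hence "(5::'a) = 0" using assms(5) by simp
    hence "of_nat 5 = (0::'a)" by simp
    hence "CHAR('a) dvd 5" by (simp only: of_nat_eq_0_iff_char_dvd)
    hence p5: "p dvd 5" using ch by simp
    have "p \<le> 5" using dvd_imp_le[OF p5] by simp
    moreover have "p \<ge> 2" using p(1) prime_ge_2_nat by blast
    ultimately have "p = 2 \<or> p = 3 \<or> p = 4 \<or> p = 5" by auto
    hence "p = 5" using p5 by auto
    hence "q mod 5 = 0" using p(2,3) by (simp add: power_0_left)
    thus False using assms(3) by simp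
  qed
  show ?thesis by (rule main_ctx[OF FA qpos FIN assms(4,5) b3 assms(6)])
qed

end
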